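(* Fix $m\ge1$, $n\ge0$ and $i\in Ag$. Every labelled sequent derivable in $\mathsf{G3Ldm}_{n}^{m}+\mathsf{PR}$ is derivable in $\mathsf{G3Ldm}_{n}^{m}+\mathsf{PR}$ without any use of the rule $(\mathsf{eucl}_i)$.
   Context: Language. $Ag=\{1,\dots,m\}$, $Var$ a countable set of propositional variables; formulas $\phi ::= p \mid \overline{p} \mid (\phi\wedge\phi) \mid (\phi\vee\phi) \mid \Box\phi \mid \Diamond\phi \mid [i]\phi \mid \langle i\rangle\phi$. Labelled sequents $\mathcal{R},\Gamma$: $\mathcal{R}$ a multiset of relational atoms $\mathcal{R}_ixy$, $\Gamma$ a multiset of labelled formulas $x:\phi$. Derivations are finite trees whose leaves are $(\mathsf{id})$ instances. Rules of $\mathsf{G3Ldm}_{n}^{m}$ (premise(s) / conclusion): $(\mathsf{id})$: / $\mathcal{R}, w:p, w:\overline{p},\Gamma$. $(\wedge)$: $\mathcal{R}, w:\phi\wedge\psi, w:\phi,\Gamma$ and $\mathcal{R}, w:\phi\wedge\psi, w:\psi,\Gamma$ / $\mathcal{R}, w:\phi\wedge\psi,\Gamma$. $(\vee)$: $\mathcal{R}, w:\phi\vee\psi, w:\phi, w:\psi,\Gamma$ / $\mathcal{R}, w:\phi\vee\psi,\Gamma$. $([i])$: $\mathcal{R},\mathcal{R}_iwv, v:\phi,\Gamma$ / $\mathcal{R}, w:[i]\phi,\Gamma$ ($v$ fresh). $(\Box)$: $\mathcal{R}, w:\Box\phi, v:\phi,\Gamma$ / $\mathcal{R}, w:\Box\phi,\Gamma$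 ($v$ fresh). $(\Diamond)$: $\mathcal{R}, w:\Diamond\phi, u:\phi,\Gamma$ / $\mathcal{R}, w:\Diamond\phi,\Gamma$. $(\mathsf{IOA})$: $\mathcal{R},\mathcal{R}_1u_1v,\dots,\mathcal{R}_mu_mv,\Gamma$ / $\mathcal{R},\Gamma$ ($v$ fresh). $(\langle i\rangle)$: $\mathcal{R},\mathcal{R}_iwu, w:\langle i\rangle\phi, u:\phi,\Gamma$ / $\mathcal{R},\mathcal{R}_iwu, w:\langle i\rangle\phi,\Gamma$. $(\mathsf{refl}_i)$: $\mathcal{R},\mathcal{R}_iww,\Gamma$ / $\mathcal{R},\Gamma$. $(\mathsf{eucl}_i)$: $\mathcal{R},\mathcal{R}_iwu,\mathcal{R}_iwv,\mathcal{R}_iuv,\Gamma$ / $\mathcal{R},\mathcal{R}_iwu,\mathcal{R}_iwv,\Gamma$. $(\mathsf{APC}^i_n)$ (only if $n>0$): premises $\mathcal{R},\mathcal{R}_iw_kw_j,\Gamma$ for all $0\le k\le n-1$, $k+1\le j\le n$ / $\mathcal{R},\Gamma$. "Fresh" means not occurring in the conclusion. One copy of the indexed rules for each agent. $\mathsf{G3Ldm}_{n}^{m}+\mathsf{PR}$ adds, for each $i\in Ag$, the propagation rule $(\mathsf{Pr}_i)$: $\mathcal{R}, w:\langle i\rangle\phi, u:\phi,\Gamma$ / $\mathcal{R}, w:\langle i\rangle\phi,\Gamma$, applicable only if $w=u$ or there are labels $w=z_0,\dots,z_k=u$ ($k\ge1$) with $\mathcal{R}_iz_lz_{l+1}\in\mathcal{R}$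 or $\mathcal{R}_iz_{l+1}z_l\in\mathcal{R}$ for each $l<k$. *)

theory Defs
  imports Main "HOL-Library.Multiset"
begin

text \<open>Formulas of the language (in negation normal form). Agents, labels and
propositional variables are natural numbers; the agents are Ag = {1..m}.\<close>

datatype fml =
    At nat
  | NAt nat
  | And fml fml
  | Or fml fml
  | Box fml
  | Dia fml
  | Stit nat fml
  | Pos nat fml

type_synonym label = nat

text \<open>Relational atom R_i x y is represented as (i, x, y); labelled formula x:phi as (x, phi).\<close>
type_synonym ratom = "nat \<times> label \<times> label"
type_synonym lfml = "label \<times> fml"

definition rlabels :: "ratom multiset \<Rightarrow> label set" where
  "rlabels R = (\<Union>(i, x, y) \<in> set_mset R. {x, y})"

definition flabels :: "lfml multiset \<Rightarrow> label set" where
  "flabels G = fst ` set_mset G"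

definition labels :: "ratom multiset \<Rightarrow> lfml multiset \<Rightarrow> label set" where
  "labels R G = rlabels R \<union> flabels G"

definition iedge :: "nat \<Rightarrow> ratom multiset \<Rightarrow> label \<Rightarrow> label \<Rightarrow> bool" where
  "iedge i R x y \<longleftrightarrow> (i, x, y) \<in># R \<or> (i, y, x) \<in># R"

text \<open>Derivability in G3Ldm^m_n + PR, where the rule (eucl_i) is available exactly
for the agents i in E.  The full calculus is  deriv m n {1..m}.\<close>

inductive deriv :: "nat \<Rightarrow> nat \<Rightarrow> nat set \<Rightarrow> ratom multiset \<Rightarrow> lfml multiset \<Rightarrow> bool"
  for m :: nat and n :: nat and E :: "nat set" where
  id: "deriv m n E R (add_mset (w, At p) (add_mset (w, NAt p) G))"
| conj: "deriv m n E R (add_mset (w, And a b) (add_mset (w, a) G)) \<Longrightarrow>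
         deriv m n E R (add_mset (w, And a b) (add_mset (w, b) G)) \<Longrightarrow>
         deriv m n E R (add_mset (w, And a b) G)"
| disj: "deriv m n E R (add_mset (w, Or a b) (add_mset (w, a) (add_mset (w, b) G))) \<Longrightarrow>
         deriv m n E R (add_mset (w, Or a b) G)"
| stit: "i \<in> {1..m} \<Longrightarrow> v \<notin> labels R (add_mset (w, Stit i a) G) \<Longrightarrow>
         deriv m n E (add_mset (i, w, v) R) (add_mset (v, a) G) \<Longrightarrow>
         deriv m n E R (add_mset (w, Stit i a) G)"
| box: "v \<notin> labels R (add_mset (w, Box a) G) \<Longrightarrow>
        deriv m n E R (add_mset (w, Box a) (add_mset (v, a) G)) \<Longrightarrow>
        deriv m n E R (add_mset (w, Box a) G)"
| dia: "deriv m n E R (add_mset (w, Dia a) (add_mset (u, a) G)) \<Longrightarrow>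
        deriv m n E R (add_mset (w, Dia a) G)"
| ioa: "v \<notin> labels R G \<Longrightarrow>
        deriv m n E (R + mset (map (\<lambda>j. (j, u j, v)) [1..<Suc m])) G \<Longrightarrow>
        deriv m n E R G"
| pos: "i \<in> {1..m} \<Longrightarrow>
        deriv m n E (add_mset (i, w, u) R) (add_mset (w, Pos i a) (add_mset (u, a) G)) \<Longrightarrow>
        deriv m n E (add_mset (i, w, u) R) (add_mset (w, Pos i a) G)"
| refl: "i \<in> {1..m} \<Longrightarrow> deriv m n E (add_mset (i, w, w) R) G \<Longrightarrow> deriv m n E R G"
| eucl: "i \<in> {1..m} \<Longrightarrow> i \<in> E \<Longrightarrow>
         deriv m n E (add_mset (i, w, u) (add_mset (i, w, v) (add_mset (i, u, v) R))) G \<Longrightarrow>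
         deriv m n E (add_mset (i, w, u) (add_mset (i, w, v) R)) G"
| apc: "i \<in> {1..m} \<Longrightarrow> n > 0 \<Longrightarrow>
        (\<forall>k j. k \<le> n - 1 \<and> k + 1 \<le> j \<and> j \<le> n \<longrightarrow>
                 deriv m n E (add_mset (i, ws k, ws j) R) G) \<Longrightarrow>
        deriv m n E R G"
| pr: "i \<in> {1..m} \<Longrightarrow> (iedge i R)\<^sup>*\<^sup>* w u \<Longrightarrow>
       deriv m n E R (add_mset (w, Pos i a) (add_mset (u, a) G)) \<Longrightarrow>
       deriv m n E R (add_mset (w, Pos i a) G)"

end

theory Submission
  imports Defs
begin

definition validS :: "nat \<Rightarrow> ratom multiset \<Rightarrow> ratom multiset \<Rightarrow> bool" where
  "validS i R S \<longleftrightarrow> (\<forall>a \<in># S. fst a = i \<and> (iedge i R)\<^sup>*\<^sup>* (fst (snd a)) (snd (snd a)))"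

lemma iedge_sym: "iedge i R x y = iedge i R y x"
  unfolding iedge_def by auto

lemma rt_sym: "(iedge i R)\<^sup>*\<^sup>* x y \<Longrightarrow> (iedge i R)\<^sup>*\<^sup>* y x"
proof (induction rule: rtranclp_induct)
  case base then show ?case by simp
next
  case (step y z)
  then have "iedge i R z y" using iedge_sym by metis
  then show ?case using step(3) by (meson converse_rtranclp_into_rtranclp)
qed

lemma iedge_mono: "R \<subseteq># R2 \<Longrightarrow> iedge i R x y \<Longrightarrow> iedge i R2 x y"
  unfolding iedge_def by (meson mset_subset_eqD)

lemma rt_mono: "R \<subseteq># R2 \<Longrightarrow> (iedge i R)\<^sup>*\<^sup>* x y \<Longrightarrow> (iedge i R2)\<^sup>*\<^sup>* x y"
proof -
  assume s: "R \<subseteq># R2" and h: "(iedge i R)\<^sup>*\<^sup>* x y"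
  show ?thesis using h
  proof (induction rule: rtranclp_induct)
    case base then show ?case by simp
  next
    case (step y z) then show ?case using iedge_mono[OF s] by (meson rtranclp.rtrancl_into_rtrancl)
  qed
qed

lemma validS_mono: "validS i R S \<Longrightarrow> R \<subseteq># R2 \<Longrightarrow> validS i R2 S"
  unfolding validS_def using rt_mono by blast

lemma validS_add: "validS i R S \<Longrightarrow> validS i (add_mset x R) S"
  by (erule validS_mono) simp

lemma validS_plus: "validS i R S \<Longrightarrow> validS i (R + T) S"
  using validS_mono by simp

lemma edge_in: "validS i R S \<Longrightarrow> (j, x, y) \<in># R + S \<Longrightarrow> (iedge j R)\<^sup>*\<^sup>* x y"
proof -
  assume v: "validS i R S" and a: "(j, x, y) \<in># R + S"
  show ?thesis
  proof (cases "(j, x, y) \<in># R")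
    case True then show ?thesis unfolding iedge_def by auto
  next
    case False then have "(j, x, y) \<in># S" using a by simp
    then show ?thesis using v unfolding validS_def by fastforce
  qed
qed

lemma rt_transfer:
  assumes v: "validS i R S" and h: "(iedge j (R + S))\<^sup>*\<^sup>* x y"
  shows "(iedge j R)\<^sup>*\<^sup>* x y"
  using h
proof (induction rule: rtranclp_induct)
  case base then show ?case by simp
next
  case (step y z)
  have "(iedge j R)\<^sup>*\<^sup>* y z"
  proof (cases "(j, y, z) \<in># R + S")
    case True then show ?thesis using edge_in v by blast
  next
    case False then have "(j, z, y) \<in># R + S" using step(2) unfolding iedge_def by blast
    then show ?thesis using edge_in v rt_sym by blast
  qed
  then show ?case using step by (meson rtranclp_trans)
qed

lemma dec1: "add_mset a R0 = R + S \<Longrightarrow> a \<notin># S \<Longrightarrow> \<exists>R1. R = add_mset a R1 \<and> R0 = R1 + S"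
proof -
  assume h: "add_mset a R0 = R + S" and n: "a \<notin># S"
  have "a \<in># R + S" using h[symmetric] by simp
  then have "a \<in># R" using n by simp
  then obtain R1 where R1: "R = add_mset a R1" by (metis multi_member_split)
  then have "R0 = R1 + S" using h by simp
  then show ?thesis using R1 by blast
qed
lemma dec2: "add_mset a (add_mset b R0) = R + S \<Longrightarrow> a \<notin># S \<Longrightarrow> b \<notin># S \<Longrightarrow> \<exists>R1. R = add_mset a (add_mset b R1) \<and> R0 = R1 + S"
proof -
  assume h: "add_mset a (add_mset b R0) = R + S" and n: "a \<notin># S" "b \<notin># S"
  obtain Ra where Ra: "R = add_mset a Ra" "add_mset b R0 = Ra + S" using dec1[OF h n(1)] by blast
  obtain R1 where "Ra = add_mset b R1" "R0 = R1 + S" using dec1[OF Ra(2) n(2)] by blast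
  then show ?thesis using Ra by blast
qed

lemma labels_mono: "R' = R + S \<Longrightarrow> labels R G \<subseteq> labels R' G"
  unfolding labels_def rlabels_def by auto

lemma main:
  assumes "deriv m n E R' G"
  shows "R' = R + S \<Longrightarrow> validS i R S \<Longrightarrow> deriv m n (E - {i}) R G"
  using assms
proof (induction arbitrary: R S rule: deriv.induct)
  case (id R' w p G)
  then show ?case by (simp add: deriv.id)
next
  case (conj)
  show ?case by (rule deriv.conj[OF conj.IH(1)[OF conj.prems] conj.IH(2)[OF conj.prems]])
next
  case (disj)
  show ?case by (rule deriv.disj[OF disj.IH[OF disj.prems]])
next
  case (stit j v R' w a G)
  have "add_mset (j, w, v) R' = add_mset (j, w, v) R + S" using stit.prems(1) by simp
  then have "deriv m n (E - {i}) (add_mset (j, w, v) R) (add_mset (v, a) G)"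
    using stit.IH validS_add[OF stit.prems(2)] by blast
  moreover have "v \<notin> labels R (add_mset (w, Stit j a) G)"
    using stit(2) labels_mono[OF stit.prems(1)] by auto
  ultimately show ?case by (rule deriv.stit[OF stit(1), rotated])
next
  case (box v R' w a G)
  have "deriv m n (E - {i}) R (add_mset (w, Box a) (add_mset (v, a) G))"
    using box.IH[OF box.prems] .
  moreover have "v \<notin> labels R (add_mset (w, Box a) G)"
    using box(1) labels_mono[OF box.prems(1)] by auto
  ultimately show ?case by (rule deriv.box[rotated])
next
  case (dia)
  show ?case by (rule deriv.dia[OF dia.IH[OF dia.prems]])
next
  case (ioa v R' G u)
  let ?T = "mset (map (\<lambda>j. (j, u j, v)) [1..<Suc m])"
  have "R' + ?T = (R + ?T) + S" using ioa.prems(1) by simp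
  then have d: "deriv m n (E - {i}) (R + ?T) G" using ioa.IH validS_plus[OF ioa.prems(2)] by blast
  have f: "v \<notin> labels R G"
    using ioa(1) labels_mono[OF ioa.prems(1)] by auto
  show ?case by (rule deriv.ioa[OF f d])
next
  case (pos j w u R0 a G)
  have "(j, w, u) \<in># R + S" using pos.prems(1)[symmetric] by simp
  then have c: "(iedge j R)\<^sup>*\<^sup>* w u" using edge_in pos(5) by blast
  have d: "deriv m n (E - {i}) R (add_mset (w, Pos j a) (add_mset (u, a) G))"
    using pos.IH[OF pos.prems] .
  show ?case by (rule deriv.pr[OF pos(1) c d])
next
  case (refl j w R' G)
  have "add_mset (j, w, w) R' = add_mset (j, w, w) R + S" using refl.prems(1) by simp
  then have "deriv m n (E - {i}) (add_mset (j, w, w) R) G" using refl.IH validS_add[OF refl.prems(2)] by blast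
  then show ?case by (rule deriv.refl[OF refl(1)])
next
  case (eucl j w u v R0 G)
  show ?case
  proof (cases "j = i")
    case True
    have m1: "(j, w, u) \<in># R + S" using eucl.prems(1)[symmetric] by simp
    have m2: "(j, w, v) \<in># R + S" by (metis eucl.prems(1) add_mset_commute union_single_eq_member)
    have wu: "(iedge i R)\<^sup>*\<^sup>* w u" using edge_in[OF eucl.prems(2) m1] True by simp
    have wv: "(iedge i R)\<^sup>*\<^sup>* w v" using edge_in[OF eucl.prems(2) m2] True by simp
    have uv: "(iedge i R)\<^sup>*\<^sup>* u v" using rtranclp_trans[OF rt_sym[OF wu] wv] .
    have vS: "validS i R (add_mset (j, u, v) S)" using eucl.prems(2) uv True unfolding validS_def by auto
    have eq: "add_mset (j, w, u) (add_mset (j, w, v) (add_mset (j, u, v) R0)) = R + add_mset (j, u, v) S"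
    proof -
      have "R + add_mset (j, u, v) S = add_mset (j, u, v) (R + S)" by simp
      also have "\<dots> = add_mset (j, u, v) (add_mset (j, w, u) (add_mset (j, w, v) R0))"
        using eucl.prems(1) by simp
      also have "\<dots> = add_mset (j, w, u) (add_mset (j, w, v) (add_mset (j, u, v) R0))"
        by (metis add_mset_commute)
      finally show ?thesis by simp
    qed
    show ?thesis by (rule eucl.IH[OF eq vS])
  next
    case False
    have n1: "(j, w, u) \<notin># S" and n2: "(j, w, v) \<notin># S"
      using eucl.prems(2) False unfolding validS_def by auto
    obtain R1 where R1: "R = add_mset (j, w, u) (add_mset (j, w, v) R1)" and R0eq: "R0 = R1 + S"
      using dec2[OF eucl.prems(1) n1 n2] by blast
    have eq: "add_mset (j, w, u) (add_mset (j, w, v) (add_mset (j, u, v) R0))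
          = add_mset (j, w, u) (add_mset (j, w, v) (add_mset (j, u, v) R1)) + S"
      using R0eq by simp
    have sub: "R \<subseteq># add_mset (j, w, u) (add_mset (j, w, v) (add_mset (j, u, v) R1))"
      using R1 by simp
    have vS: "validS i (add_mset (j, w, u) (add_mset (j, w, v) (add_mset (j, u, v) R1))) S"
      by (rule validS_mono[OF eucl.prems(2) sub])
    have d: "deriv m n (E - {i}) (add_mset (j, w, u) (add_mset (j, w, v) (add_mset (j, u, v) R1))) G"
      by (rule eucl.IH[OF eq vS])
    have jE: "j \<in> E - {i}" using eucl(2) False by simp
    show ?thesis unfolding R1 by (rule deriv.eucl[OF eucl(1) jE d])
  qed
next
  case (apc j ws R' G)
  have "\<forall>k l. k \<le> n - 1 \<and> k + 1 \<le> l \<and> l \<le> n \<longrightarrow>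
          deriv m n (E - {i}) (add_mset (j, ws k, ws l) R) G"
  proof (intro allI impI)
    fix k l assume h: "k \<le> n - 1 \<and> k + 1 \<le> l \<and> l \<le> n"
    have "add_mset (j, ws k, ws l) R' = add_mset (j, ws k, ws l) R + S" using apc.prems(1) by simp
    moreover have "validS i (add_mset (j, ws k, ws l) R) S" using validS_add[OF apc.prems(2)] .
    moreover have "\<And>R S. add_mset (j, ws k, ws l) R' = R + S \<Longrightarrow> validS i R S \<Longrightarrow> deriv m n (E - {i}) R G"
      using apc(3) h by blast
    ultimately show "deriv m n (E - {i}) (add_mset (j, ws k, ws l) R) G" by blast
  qed
  then show ?case by (rule deriv.apc[OF apc(1,2)])
next
  case (pr j R' w u a G)
  have c: "(iedge j R)\<^sup>*\<^sup>* w u" using pr(2) pr.prems rt_transfer by blast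
  have d: "deriv m n (E - {i}) R (add_mset (w, Pos j a) (add_mset (u, a) G))" using pr.IH[OF pr.prems] .
  show ?case by (rule deriv.pr[OF pr(1) c d])
qed

theorem lemma3:
  fixes m n i :: nat and R :: "ratom multiset" and G :: "lfml multiset"
  assumes "m \<ge> 1" and "i \<in> {1..m}"
    and "deriv m n {1..m} R G"
  shows "deriv m n ({1..m} - {i}) R G"
  using main[OF assms(3), of R "{#}" i] unfolding validS_def by simp

end
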